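(* Let $c,n\in\mathbb N$ with $c\ge2$, $n\ge2$, and let $s\in(0,1/2]$. For any real $\gamma\ge 2-(n-1)(2s-1)$, \[\sum_{\substack{(a_1,\ldots,a_n)\in\mathbb N^n\\ c\le a_1<a_2<\cdots<a_n}}\frac{1}{(a_1\cdots a_{n-1})^{2s}a_n^{\gamma}}\le\frac{1}{(c-1)^{\gamma+n(2s-1)-2s}}.\] *)

theory Defs
  imports "HOL-Analysis.Analysis"
begin

definition incr_tuples :: "nat \<Rightarrow> nat \<Rightarrow> nat list set" where
  "incr_tuples n c = {as. length as = n \<and> sorted_wrt (<) as \<and> c \<le> hd as}"

definition lemma_term :: "real \<Rightarrow> real \<Rightarrow> nat list \<Rightarrow> real" where
  "lemma_term s \<gamma> as =
     1 / ((prod_list (map real (butlast as))) powr (2 * s) * (real (last as)) powr \<gamma>)"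

end

theory Submission
  imports Defs
begin

lemma pt:
  fixes x e :: real assumes "x \<ge> 2" "e \<ge> 2"
  shows "1 / x powr e \<le> 1 / (x - 1) powr (e - 1) - 1 / x powr (e - 1)"
proof -
  have x1: "x - 1 > 0" using assms by simp
  define r where "r = (x/(x-1)) powr (e-1)"
  have q: "x/(x-1) \<ge> 1" using x1 by simp
  have r1: "r \<ge> x/(x-1)"
    unfolding r_def using powr_mono[OF _ q, of 1 "e-1"] assms by simp
  have r2: "x/(x-1) = 1 + 1/(x-1)" using x1 by (simp add: field_simps)
  have r3: "1/(x-1) \<ge> 1/x" using x1 by (simp add: frac_le)
  have rr: "r \<ge> 1 + 1/x" using r1 r2 r3 by linarith
  have e1: "1 / (x - 1) powr (e - 1) = r / x powr (e-1)"
    unfolding r_def using x1 assms by (simp add: powr_divide)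
  have e2: "1 / x powr e = (1/x) / x powr (e-1)"
    using assms by (simp add: powr_diff)
  have "(1/x) / x powr (e-1) \<le> (r - 1) / x powr (e-1)"
    using rr assms by (intro divide_right_mono) auto
  then show ?thesis using e1 e2 by (simp add: diff_divide_distrib)
qed
lemma tele:
  fixes c k :: nat and e :: real assumes "c \<ge> 2" "e \<ge> 2"
  shows "(\<Sum>a\<in>{c..<c+k}. 1 / real a powr e) \<le> 1 / (real c - 1) powr (e - 1) - 1 / (real (c+k) - 1) powr (e - 1)"
proof (induction k)
  case 0 then show ?case by simp
next
  case (Suc k)
  have "1 / real (c+k) powr e \<le> 1 / (real (c+k) - 1) powr (e - 1) - 1 / real (c+k) powr (e - 1)"
    using pt[of "real (c+k)" e] assms by simp
  then show ?case using Suc by simp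
qed

lemma tele_fin:
  fixes c :: nat and e :: real and A :: "nat set" assumes "c \<ge> 2" "e \<ge> 2" "finite A" "A \<subseteq> {c..}"
  shows "(\<Sum>a\<in>A. 1 / real a powr e) \<le> 1 / (real c - 1) powr (e - 1)"
proof -
  obtain k where k: "A \<subseteq> {..<k}" using finite_nat_bounded[OF assms(3)] by blast
  have "A \<subseteq> {c..<c+k}" using k assms(4) by force
  then have "(\<Sum>a\<in>A. 1 / real a powr e) \<le> (\<Sum>a\<in>{c..<c+k}. 1 / real a powr e)"
    by (intro sum_mono2) auto
  also have "\<dots> \<le> 1 / (real c - 1) powr (e - 1) - 1 / (real (c+k) - 1) powr (e - 1)"
    by (rule tele[OF assms(1,2)])
  also have "\<dots> \<le> 1 / (real c - 1) powr (e - 1)" using assms(1) by simp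
  finally show ?thesis .
qed

lemma term_nonneg: "lemma_term s \<gamma> xs \<ge> 0"
  unfolding lemma_term_def by simp

lemma term_single: "lemma_term s \<gamma> [a] = 1 / real a powr \<gamma>"
  unfolding lemma_term_def by simp

lemma term_cons:
  assumes "xs \<noteq> []"
  shows "lemma_term s \<gamma> (a # xs) = (1 / real a powr (2 * s)) * lemma_term s \<gamma> xs"
proof -
  have "prod_list (map real (butlast (a # xs))) = real a * prod_list (map real (butlast xs))"
    using assms by simp
  moreover have "last (a # xs) = last xs" using assms by simp
  moreover have "(real a * prod_list (map real (butlast xs))) powr (2 * s)
      = real a powr (2 * s) * prod_list (map real (butlast xs)) powr (2 * s)"
    by (simp add: powr_mult prod_list_nonneg)
  ultimately show ?thesis unfolding lemma_term_def by simp
qed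

lemma main:
  assumes n1: "n \<ge> 1" and s0: "0 < s" and s1: "s \<le> 1/2"
  shows "\<forall>c F. 2 \<le> c \<longrightarrow> finite F \<longrightarrow> F \<subseteq> incr_tuples n c
     \<longrightarrow> \<gamma> \<ge> 2 - (real n - 1) * (2 * s - 1)
     \<longrightarrow> sum (lemma_term s \<gamma>) F \<le> 1 / (real c - 1) powr (\<gamma> + real n * (2 * s - 1) - 2 * s)"
  using n1
proof (induction n rule: nat_induct_at_least)
  case base
  show ?case
  proof (intro allI impI)
    fix c :: nat and F
    assume c2: "2 \<le> c" and fin: "finite F" and sub: "F \<subseteq> incr_tuples 1 c"
      and g: "\<gamma> \<ge> 2 - (real 1 - 1) * (2 * s - 1)"
    have FA: "F = (\<lambda>a. [a]) ` (hd ` F)"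
    proof -
      have "\<And>l. l \<in> F \<Longrightarrow> l = [hd l]" using sub unfolding incr_tuples_def
        by (auto simp: length_Suc_conv)
      then show ?thesis by (auto simp: image_iff)
    qed
    have "sum (lemma_term s \<gamma>) F = (\<Sum>a\<in>hd ` F. lemma_term s \<gamma> [a])"
      by (subst FA, subst sum.reindex) (auto simp: inj_on_def)
    also have "\<dots> = (\<Sum>a\<in>hd ` F. 1 / real a powr \<gamma>)" by (simp add: term_single)
    also have "\<dots> \<le> 1 / (real c - 1) powr (\<gamma> - 1)"
      using sub g by (intro tele_fin c2 fin) (auto simp: incr_tuples_def fin)
    finally show "sum (lemma_term s \<gamma>) F \<le> 1 / (real c - 1) powr (\<gamma> + real 1 * (2 * s - 1) - 2 * s)"
      by simp
  qed
next
  case (Suc n)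
  show ?case
  proof (intro allI impI)
    fix c :: nat and F
    assume c2: "2 \<le> c" and fin: "finite F" and sub: "F \<subseteq> incr_tuples (Suc n) c"
      and g: "\<gamma> \<ge> 2 - (real (Suc n) - 1) * (2 * s - 1)"
    define e where "e = \<gamma> + real n * (2 * s - 1)"
    have e2: "e \<ge> 2" using g unfolding e_def by simp
    have gn: "\<gamma> \<ge> 2 - (real n - 1) * (2 * s - 1)"
    proof -
      have "(real n - 1) * (2 * s - 1) \<ge> real n * (2 * s - 1)" using s1 by (simp add: algebra_simps)
      then show ?thesis using g by simp
    qed
    have ne: "\<And>l. l \<in> F \<Longrightarrow> l = hd l # tl l \<and> tl l \<noteq> []"
      using sub Suc.hyps unfolding incr_tuples_def
      by (auto simp: length_Suc_conv)
    have bound: "sum (lemma_term s \<gamma>) {l \<in> F. hd l = a} \<le> 1 / real a powr e"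
      if aA: "a \<in> hd ` F" for a
    proof -
      define G where "G = tl ` {l \<in> F. hd l = a}"
      have eqG: "{l \<in> F. hd l = a} = Cons a ` G"
        unfolding G_def using ne by (auto simp: image_iff)
      have finG: "finite G" unfolding G_def using fin by simp
      have ac: "a \<ge> c" using aA sub unfolding incr_tuples_def by auto
      have subG: "G \<subseteq> incr_tuples n (Suc a)"
      proof
        fix xs assume "xs \<in> G"
        then obtain l where l: "l \<in> F" "hd l = a" "xs = tl l" unfolding G_def by auto
        then have l2: "l = a # xs" "xs \<noteq> []" using ne by metis+
        have "length l = Suc n" "sorted_wrt (<) l" using l(1) sub unfolding incr_tuples_def by auto
        then show "xs \<in> incr_tuples n (Suc a)" unfolding incr_tuples_def using l2
          by (cases xs) auto
      qed
      have nonemp: "\<And>xs. xs \<in> G \<Longrightarrow> xs \<noteq> []" unfolding G_def using ne by auto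
      have "sum (lemma_term s \<gamma>) {l \<in> F. hd l = a} = sum (\<lambda>xs. lemma_term s \<gamma> (a # xs)) G"
        unfolding eqG by (subst sum.reindex) (auto simp: inj_on_def)
      also have "\<dots> = (1 / real a powr (2 * s)) * sum (lemma_term s \<gamma>) G"
        by (simp add: sum_distrib_left term_cons nonemp)
      also have "\<dots> \<le> (1 / real a powr (2 * s)) * (1 / (real (Suc a) - 1) powr (\<gamma> + real n * (2 * s - 1) - 2 * s))"
        using Suc.IH[rule_format, of "Suc a" G] c2 ac finG subG gn by (intro mult_left_mono) auto
      also have "\<dots> = 1 / real a powr e"
      proof -
        have a0: "real a > 0" using ac c2 by simp
        have "real a powr (2 * s) * real a powr (e - 2 * s) = real a powr e"
          by (simp add: powr_add[symmetric])
        then show ?thesis unfolding e_def by simp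
      qed
      finally show ?thesis .
    qed
    have "sum (lemma_term s \<gamma>) F = (\<Sum>a\<in>hd ` F. sum (lemma_term s \<gamma>) {l \<in> F. hd l = a})"
      using sum.image_gen[OF fin, of "lemma_term s \<gamma>" hd] by simp
    also have "\<dots> \<le> (\<Sum>a\<in>hd ` F. 1 / real a powr e)"
      by (intro sum_mono bound)
    also have "\<dots> \<le> 1 / (real c - 1) powr (e - 1)"
      using sub by (intro tele_fin c2 e2) (auto simp: incr_tuples_def fin)
    finally show "sum (lemma_term s \<gamma>) F \<le> 1 / (real c - 1) powr (\<gamma> + real (Suc n) * (2 * s - 1) - 2 * s)"
      unfolding e_def by (simp add: algebra_simps)
  qed
qed

theorem lemma2p3:
  fixes c n :: nat and s \<gamma> :: real
  assumes "c \<ge> 2" and "n \<ge> 2" and "0 < s" and "s \<le> 1/2"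
    and "\<gamma> \<ge> 2 - (real n - 1) * (2 * s - 1)"
  shows "lemma_term s \<gamma> summable_on incr_tuples n c
       \<and> infsum (lemma_term s \<gamma>) (incr_tuples n c)
           \<le> 1 / (real c - 1) powr (\<gamma> + real n * (2 * s - 1) - 2 * s)"
proof -
  have B: "\<And>F. finite F \<Longrightarrow> F \<subseteq> incr_tuples n c \<Longrightarrow> sum (lemma_term s \<gamma>) F
      \<le> 1 / (real c - 1) powr (\<gamma> + real n * (2 * s - 1) - 2 * s)"
    using main[of n s \<gamma>] assms by auto
  have S: "lemma_term s \<gamma> summable_on incr_tuples n c"
    by (rule nonneg_bdd_above_summable_on) (auto simp: term_nonneg bdd_above_def intro!: exI[of _ "1 / (real c - 1) powr (\<gamma> + real n * (2 * s - 1) - 2 * s)"] B)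
  show ?thesis using S infsum_le_finite_sums[OF S B] by blast
qed

end
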